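(* Let $x,v,g:[0,\infty)\to\mathbb{R}^3$ satisfy \[\dot x=v(t),\qquad \dot v=-a(x,t)v(t)+g(t),\] where the scalar coefficient satisfies $a(x,t)\ge H/(1+|x|^2)^{\beta}$ for some constants $H>0$ and $\beta<1/2$, and $|g(t)|=O((1+t)^{-\eta})$ for some constant $\eta>1$. Then $|v(t)|=O((1+t)^{-(\eta-1)})$, with the order constant depending only on $x(0)$, $v(0)$, $H$, $\beta$ and $\eta$. *)

theory Defs
  imports "HOL-Analysis.Analysis"
begin

end

theory Submission
  imports Defs
begin

lemma comparison:
  fixes f :: "real \<Rightarrow> real"
  assumes "t0 \<le> T" "continuous_on {t0..T} f" "f t0 \<le> 0"
    and D: "\<And>t. t0 < t \<Longrightarrow> t < T \<Longrightarrow> f t > 0 \<Longrightarrow> \<exists>D. (f has_real_derivative D) (at t) \<and> D \<le> 0"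
  shows "f T \<le> 0"
proof (rule ccontr)
  assume nT: "\<not> f T \<le> 0"
  define S where "S = {t0..T} \<inter> f -` {..0}"
  have cl: "closed S" unfolding S_def
    by (rule continuous_closed_preimage[OF assms(2)]) auto
  have ne: "S \<noteq> {}" using assms(1,3) unfolding S_def by auto
  have bd: "bdd_above S" unfolding S_def by (auto intro: bdd_aboveI[of _ T])
  define s where "s = Sup S"
  have sS: "s \<in> S" unfolding s_def using closed_contains_Sup[OF ne bd cl] .
  hence s1: "t0 \<le> s" "s \<le> T" "f s \<le> 0" unfolding S_def by auto
  have pos: "f t > 0" if "s < t" "t \<le> T" for t
  proof (rule ccontr)
    assume "\<not> f t > 0"
    hence "t \<in> S" using that s1 unfolding S_def by auto
    hence "t \<le> s" unfolding s_def using bd by (rule cSup_upper)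
    thus False using that by simp
  qed
  have "f T \<le> f s"
    apply (rule DERIV_nonpos_imp_decreasing_open[OF s1(2)])
    subgoal for t using D[of t] pos[of t] s1 by auto
    using assms(2) s1 by (auto intro: continuous_on_subset)
  thus False using s1 nT by simp
qed

lemma norm_deriv_bound:
  fixes v :: "real \<Rightarrow> 'a::real_inner"
  assumes "(v has_vector_derivative (- A *\<^sub>R v t + gt)) (at t)" "v t \<noteq> 0"
  shows "\<exists>D. ((\<lambda>s. norm (v s)) has_real_derivative D) (at t) \<and> D \<le> - A * norm (v t) + norm gt"
proof -
  have d: "((\<lambda>s. norm (v s)) has_derivative (\<lambda>h. sgn (v t) \<bullet> (h *\<^sub>R (- A *\<^sub>R v t + gt)))) (at t)"
    using has_derivative_compose[OF assms(1)[unfolded has_vector_derivative_def] has_derivative_norm[OF assms(2)]]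
    by (simp add: o_def inner_commute)
  define D where "D = sgn (v t) \<bullet> (- A *\<^sub>R v t + gt)"
  have "((\<lambda>s. norm (v s)) has_real_derivative D) (at t)"
  proof -
    have e: "(\<lambda>h. h * D) = (*) D" by (rule ext) (simp add: mult.commute)
    have "((\<lambda>s. norm (v s)) has_derivative (\<lambda>h. h * D)) (at t)"
      using d unfolding D_def by simp
    thus ?thesis unfolding has_field_derivative_def e .
  qed
  moreover have "D = - A * norm (v t) + sgn (v t) \<bullet> gt"
  proof -
    have "sgn (v t) \<bullet> v t = norm (v t)"
      using assms(2) by (simp add: sgn_div_norm power2_norm_eq_inner[symmetric] power2_eq_square)
    thus ?thesis unfolding D_def by (simp add: inner_diff_right inner_add_right inner_scaleR_right)
  qed
  moreover have "sgn (v t) \<bullet> gt \<le> norm gt"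
    using norm_cauchy_schwarz[of "sgn (v t)" gt] assms(2) by (simp add: norm_sgn)
  ultimately show ?thesis by auto
qed

lemma at_pos: "(t::real) > 0 \<Longrightarrow> at t within {0..} = at t"
  by (rule at_within_interior) simp

lemma cont_of_deriv:
  fixes v :: "real \<Rightarrow> 'a::real_normed_vector"
  assumes "\<forall>t\<ge>0. (v has_vector_derivative v' t) (at t within {0..})"
  shows "continuous_on {0..} v"
  unfolding continuous_on_eq_continuous_within
  using assms has_vector_derivative_continuous by fastforce

lemma powr_deriv: "t > -1 \<Longrightarrow> ((\<lambda>t. (1+t) powr r) has_real_derivative r * (1+t) powr (r-1)) (at (t::real))"
  by (auto intro!: derivative_eq_intros)

lemma stage1:
  fixes v g :: "real \<Rightarrow> 'a::real_inner" and A :: "real \<Rightarrow> real"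
  assumes dv: "\<forall>t\<ge>0. (v has_vector_derivative (- A t *\<^sub>R v t + g t)) (at t within {0..})"
    and Apos: "\<forall>t\<ge>0. A t \<ge> 0"
    and gb: "\<forall>t\<ge>0. norm (g t) \<le> Cg * (1+t) powr (-\<eta>)"
    and eta: "\<eta> > 1" and T: "T \<ge> 0"
  shows "norm (v T) \<le> norm (v 0) + Cg/(\<eta>-1)"
proof -
  have Cg: "Cg \<ge> 0" using gb[rule_format, of 0] by simp (meson norm_ge_zero order_trans)
  define m where "m t = norm (v 0) + Cg/(\<eta>-1) * (1 - (1+t) powr (1-\<eta>))" for t
  have mder: "(m has_real_derivative Cg * (1+t) powr (-\<eta>)) (at t)" if "t > -1" for t
  proof -
    have "(m has_real_derivative 0 + Cg/(\<eta>-1) * (0 - (1-\<eta>) * (1+t) powr (1-\<eta>-1))) (at t)"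
      unfolding m_def[abs_def]
      by (rule DERIV_add[OF DERIV_const DERIV_cmult[OF DERIV_diff[OF DERIV_const powr_deriv[OF that]]]])
    moreover have "Cg/(\<eta>-1) * (0 - (1-\<eta>) * (1+t) powr (1-\<eta>-1)) = Cg * (1+t) powr (-\<eta>)"
      using eta by (simp add: field_simps)
    ultimately show ?thesis by simp
  qed
  have cv: "continuous_on {0..T} v" using cont_of_deriv[OF dv] by (rule continuous_on_subset) auto
  have cm: "continuous_on {0..T} m"
  proof -
    have "continuous_on {-1<..} m"
      by (rule DERIV_continuous_on, rule has_field_derivative_at_within, rule mder) auto
    thus ?thesis by (rule continuous_on_subset) auto
  qed
  have "norm (v T) - m T \<le> 0"
  proof (rule comparison[OF T])
    show "continuous_on {0..T} (\<lambda>t. norm (v t) - m t)"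
      using cv cm by (intro continuous_intros)
    show "norm (v 0) - m 0 \<le> 0" by (simp add: m_def)
  next
    fix t assume t: "0 < t" "t < T" "norm (v t) - m t > 0"
    have "(1+t) powr (1-\<eta>) \<le> (1+t) powr 0" using eta t by (intro powr_mono) auto
    hence "(1+t) powr (1-\<eta>) \<le> 1" using t by simp
    hence "m t \<ge> norm (v 0)" using Cg eta t
      by (auto simp: m_def intro!: mult_nonneg_nonneg)
    hence nz: "v t \<noteq> 0" using t norm_ge_zero[of "v 0"] by (metis norm_zero diff_gt_0_iff_gt order.strict_trans2 less_le_not_le)
    have d: "(v has_vector_derivative (- A t *\<^sub>R v t + g t)) (at t)"
      using dv[rule_format, of t] t at_pos[of t] by simp
    obtain D where D: "((\<lambda>s. norm (v s)) has_real_derivative D) (at t)" "D \<le> - A t * norm (v t) + norm (g t)"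
      using norm_deriv_bound[OF d nz] by blast
    have "((\<lambda>t. norm (v t) - m t) has_real_derivative D - Cg * (1+t) powr (-\<eta>)) (at t)"
      using D(1) mder[of t] t by (intro derivative_intros) auto
    moreover have "D - Cg * (1+t) powr (-\<eta>) \<le> 0"
    proof -
      have "A t * norm (v t) \<ge> 0" using Apos t by simp
      thus ?thesis using D(2) gb[rule_format, of t] t by linarith
    qed
    ultimately show "\<exists>D. ((\<lambda>t. norm (v t) - m t) has_real_derivative D) (at t) \<and> D \<le> 0" by blast
  qed
  moreover have "m T \<le> norm (v 0) + Cg/(\<eta>-1)"
  proof -
    have "Cg/(\<eta>-1) * (1 - (1+T) powr (1-\<eta>)) \<le> Cg/(\<eta>-1)" using Cg eta by (intro mult_left_le) auto
    thus ?thesis by (simp add: m_def)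
  qed
  ultimately show ?thesis by simp
qed

lemma stage2:
  fixes x v :: "real \<Rightarrow> 'a::real_inner"
  assumes dx: "\<forall>t\<ge>0. (x has_vector_derivative v t) (at t within {0..})"
    and vb: "\<forall>t\<ge>0. norm (v t) \<le> M" and T: "T \<ge> 0"
  shows "norm (x T) \<le> norm (x 0) + M * T"
proof (cases "T = 0")
  case True thus ?thesis by simp
next
  case False
  hence T0: "0 < T" using T by simp
  have cx: "continuous_on {0..T} x" using cont_of_deriv[OF dx] by (rule continuous_on_subset) auto
  have "\<exists>s\<in>{0<..<T}. norm (x T - x 0) \<le> norm ((\<lambda>h. h *\<^sub>R v s) (T - 0))"
  proof (rule mvt_general[OF T0 cx])
    fix s assume "0 < s" "s < T"
    thus "(x has_derivative (\<lambda>h. h *\<^sub>R v s)) (at s)"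
      using dx[rule_format, of s] at_pos[of s] by (simp add: has_vector_derivative_def)
  qed
  then obtain s where s: "s \<in> {0<..<T}" "norm (x T - x 0) \<le> norm ((T - 0) *\<^sub>R v s)" by auto
  have s3: "T * norm (v s) \<le> T * M" using vb[rule_format, of s] s T by (intro mult_left_mono) auto
  have s4: "norm ((T - 0) *\<^sub>R v s) = T * norm (v s)" using T by simp
  have "norm (x T - x 0) \<le> T * M" using s(2) s3 s4 by linarith
  hence "norm (x T - x 0) \<le> M * T" by (simp add: mult.commute)
  thus ?thesis using norm_triangle_ineq2[of "x T" "x 0"] by simp
qed


lemma abound:
  fixes H \<beta> n p M t :: real
  assumes H: "H>0" and b: "\<beta><1/2" and n: "0\<le>n" "n \<le> p + M*t" and p: "0\<le>p" and M: "0\<le>M" and t: "0\<le>t"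
  shows "H/(1+p+M) powr (max (2*\<beta>) 0) * (1+t) powr (- max (2*\<beta>) 0) \<le> H / (1+n^2) powr \<beta>"
proof -
  define P where "P = 1+p+M"
  have P1: "P \<ge> 1" using p M by (simp add: P_def)
  have n1: "n \<le> (p+M)*(1+t)" using n p M t by (simp add: algebra_simps) (smt (verit) mult_nonneg_nonneg)
  have n2: "n^2 \<le> ((p+M)*(1+t))^2" using n1 n by (intro power_mono) auto
  have q: "1 + n^2 \<le> (P*(1+t))^2"
  proof -
    have "(P*(1+t))^2 = ((1+t) + (p+M)*(1+t))^2" by (simp add: P_def algebra_simps)
    also have "\<dots> = (1+t)^2 + ((p+M)*(1+t))^2 + 2*(1+t)*((p+M)*(1+t))" by (simp add: power2_eq_square algebra_simps)
    finally have "(P*(1+t))^2 = (1+t)^2 + ((p+M)*(1+t))^2 + 2*(1+t)*((p+M)*(1+t))" .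
    moreover have "2*(1+t)*((p+M)*(1+t)) \<ge> 0" using p M t by simp
    moreover have "(1+t)^2 \<ge> 1" using t by simp
    ultimately show ?thesis using n2 by linarith
  qed
  have n0: "1+n^2 > 0" by (simp add: add_pos_nonneg)
  hence X0: "(1+n^2) powr \<beta> > 0" by simp
  show ?thesis
  proof (cases "\<beta> \<le> 0")
    case True
    hence mx: "max (2*\<beta>) 0 = 0" by simp
    have "(1+n^2) powr \<beta> \<le> (1+n^2) powr 0" using True by (intro powr_mono) auto
    hence X1: "(1+n^2) powr \<beta> \<le> 1" using n0 by simp
    have "H \<le> H / (1+n^2) powr \<beta>" using X0 X1 H by (simp add: le_divide_eq)
    thus ?thesis using mx P1 t by (simp add: P_def[symmetric])
  next
    case False
    hence mx: "max (2*\<beta>) 0 = 2*\<beta>" by simp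
    have "(1+n^2) powr \<beta> \<le> ((P*(1+t))^2) powr \<beta>" using q False by (intro powr_mono2) auto
    also have "((P*(1+t))^2) powr \<beta> = (P*(1+t)) powr (2*\<beta>)"
    proof -
      have y: "P*(1+t) > 0" using P1 t by simp
      have "(P*(1+t))^2 = (P*(1+t)) powr (real 2)" using powr_realpow[OF y, of 2] by simp
      hence "((P*(1+t))^2) powr \<beta> = (P*(1+t)) powr (2 * \<beta>)" by (simp add: powr_powr)
      thus ?thesis .
    qed
    also have "\<dots> = P powr (2*\<beta>) * (1+t) powr (2*\<beta>)" using P1 t by (simp add: powr_mult)
    finally have X2: "(1+n^2) powr \<beta> \<le> P powr (2*\<beta>) * (1+t) powr (2*\<beta>)" .
    have "H/P powr (2*\<beta>) * (1+t) powr (- (2*\<beta>)) = H / (P powr (2*\<beta>) * (1+t) powr (2*\<beta>))"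
      by (simp add: powr_minus divide_inverse)
    also have "\<dots> \<le> H / (1+n^2) powr \<beta>" using X2 X0 H by (intro divide_left_mono mult_pos_pos) (auto simp: P1 t)
    finally show ?thesis using mx by (simp add: P_def[symmetric])
  qed
qed


lemma early:
  assumes vT: "norm (v T) \<le> (M::real)" and M: "M \<ge> 0" and T: "0 \<le> T" "T \<le> T0"
    and eta: "\<eta> > 1" and K: "K \<ge> M*(1+T0) powr (\<eta>-1)"
  shows "norm (v T) \<le> K*(1+T) powr (-(\<eta>-1))"
proof -
  have a: "(1+T) powr (\<eta>-1) \<le> (1+T0) powr (\<eta>-1)" using T eta by (intro powr_mono2) auto
  have b: "(1+T) powr (\<eta>-1) > 0" using T by simp
  have "M \<le> M*(1+T0) powr (\<eta>-1) * (1+T) powr (-(\<eta>-1))"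
  proof -
    have "1 \<le> (1+T0) powr (\<eta>-1) / (1+T) powr (\<eta>-1)" using a b by simp
    hence h: "M * 1 \<le> M * ((1+T0) powr (\<eta>-1) / (1+T) powr (\<eta>-1))" using M by (intro mult_left_mono)
    have pm: "(1+T) powr (-(\<eta>-1)) = inverse ((1+T) powr (\<eta>-1))" by (rule powr_minus)
    show ?thesis unfolding pm using h by (simp add: divide_inverse mult.assoc)
  qed
  also have "\<dots> \<le> K*(1+T) powr (-(\<eta>-1))" using K by (intro mult_right_mono) auto
  finally show ?thesis using vT by linarith
qed

lemma stage4:
  fixes v g :: "real \<Rightarrow> 'a::real_inner" and A :: "real \<Rightarrow> real"
  assumes dv: "\<forall>t\<ge>0. (v has_vector_derivative (- A t *\<^sub>R v t + g t)) (at t within {0..})"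
    and gb: "\<forall>t\<ge>0. norm (g t) \<le> Cg * (1+t) powr (-\<eta>)"
    and eta: "\<eta> > 1"
    and Ab: "\<forall>t\<ge>0. A t \<ge> c*(1+t) powr (-\<gamma>)" and c: "c > 0" and g0: "0 \<le> \<gamma>" and g1: "\<gamma> < 1"
    and vb: "\<forall>t\<ge>0. norm (v t) \<le> M" and M: "M \<ge> 0"
    and T0: "c*(1+T0) powr (1-\<gamma>) \<ge> \<eta>" "T0 \<ge> 0"
    and K: "K \<ge> Cg" "K \<ge> M*(1+T0) powr (\<eta>-1)" and T: "T \<ge> 0"
  shows "norm (v T) \<le> K*(1+T) powr (-(\<eta>-1))"
proof (cases "T \<le> T0")
  case True
  thus ?thesis using early[OF _ M T True eta K(2)] vb T by auto
next
  case False
  have Cg: "Cg \<ge> 0" using gb[rule_format, of 0] by simp (meson norm_ge_zero order_trans)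
  have K0: "K \<ge> 0" using Cg K by simp
  define B where "B t = K*(1+t) powr (-(\<eta>-1))" for t
  have Bder: "(B has_real_derivative K * ((-(\<eta>-1)) * (1+t) powr (-(\<eta>-1)-1))) (at t)" if "t > -1" for t
    unfolding B_def[abs_def] by (rule DERIV_cmult[OF powr_deriv[OF that]])
  have cv: "continuous_on {T0..T} v" using cont_of_deriv[OF dv] by (rule continuous_on_subset) (use T0 in auto)
  have cB: "continuous_on {T0..T} B"
  proof -
    have "continuous_on {-1<..} B"
      by (rule DERIV_continuous_on, rule has_field_derivative_at_within, rule Bder) auto
    thus ?thesis by (rule continuous_on_subset) (use T0 in auto)
  qed
  have "norm (v T) - B T \<le> 0"
  proof (rule comparison[of T0 T "\<lambda>t. norm (v t) - B t"])
    show "T0 \<le> T" using False by simp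
    show "continuous_on {T0..T} (\<lambda>t. norm (v t) - B t)"
      using cv cB by (intro continuous_intros)
    show "norm (v T0) - B T0 \<le> 0" using early[OF _ M T0(2) order.refl eta K(2)] vb T0 by (auto simp: B_def)
  next
    fix t assume t: "T0 < t" "t < T" "norm (v t) - B t > 0"
    have tp: "t > 0" using t T0 by simp
    have B0: "B t \<ge> 0" using K0 by (simp add: B_def)
    hence nz: "v t \<noteq> 0" using t by auto
    have d: "(v has_vector_derivative (- A t *\<^sub>R v t + g t)) (at t)"
      using dv[rule_format, of t] tp at_pos[of t] by simp
    obtain D where D: "((\<lambda>s. norm (v s)) has_real_derivative D) (at t)" "D \<le> - A t * norm (v t) + norm (g t)"
      using norm_deriv_bound[OF d nz] by blast
    define E where "E = (1+t) powr (-\<eta>)"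
    have E0: "E > 0" using tp by (simp add: E_def)
    have ex: "-(\<eta>-1)-1 = -\<eta>" by simp
    have "((\<lambda>t. norm (v t) - B t) has_real_derivative D - K * ((-(\<eta>-1)) * E)) (at t)"
      using D(1) Bder[of t] tp unfolding E_def ex[symmetric] by (intro derivative_intros) auto
    moreover have "D - K * ((-(\<eta>-1)) * E) \<le> 0"
    proof -
      have A1: "A t \<ge> c*(1+t) powr (-\<gamma>)" using Ab tp by simp
      have A0: "c*(1+t) powr (-\<gamma>) \<ge> 0" using c by simp
      have "A t * norm (v t) \<ge> c*(1+t) powr (-\<gamma>) * B t"
        using A1 A0 t B0 by (intro mult_mono) auto
      also have "c*(1+t) powr (-\<gamma>) * B t = K * (c * (1+t) powr (1-\<gamma>)) * E"
      proof -
        have "(1+t) powr (-\<gamma>) * (1+t) powr (-(\<eta>-1)) = (1+t) powr (1-\<gamma>) * (1+t) powr (-\<eta>)"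
          by (simp add: powr_add[symmetric] algebra_simps)
        thus ?thesis unfolding B_def E_def by (simp add: algebra_simps)
      qed
      finally have AB: "A t * norm (v t) \<ge> K * (c * (1+t) powr (1-\<gamma>)) * E" .
      have "c * (1+t) powr (1-\<gamma>) \<ge> c * (1+T0) powr (1-\<gamma>)"
        using t T0 g1 c by (intro mult_left_mono powr_mono2) auto
      hence "c * (1+t) powr (1-\<gamma>) \<ge> \<eta>" using T0 by linarith
      hence "K * (c * (1+t) powr (1-\<gamma>)) * E \<ge> K * \<eta> * E" using K0 E0 by (intro mult_right_mono mult_left_mono) auto
      hence AB2: "A t * norm (v t) \<ge> K * \<eta> * E" using AB by linarith
      have gE: "norm (g t) \<le> Cg * E" using gb tp by (simp add: E_def)
      have "(Cg - K) * E \<le> 0" using K E0 by (simp add: mult_nonpos_nonneg)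
      thus ?thesis using D(2) AB2 gE by (simp add: algebra_simps)
    qed
    ultimately show "\<exists>D. ((\<lambda>t. norm (v t) - B t) has_real_derivative D) (at t) \<and> D \<le> 0" by blast
  qed
  thus ?thesis by (simp add: B_def)
qed
theorem lemma4:
  fixes H \<beta> \<eta> Cg :: real
  assumes "H > 0" and "\<beta> < 1/2" and "\<eta> > 1"
  shows "\<exists>K :: real^3 \<Rightarrow> real^3 \<Rightarrow> real.
    \<forall>(x :: real \<Rightarrow> real^3) (v :: real \<Rightarrow> real^3) (g :: real \<Rightarrow> real^3)
      (a :: real^3 \<Rightarrow> real \<Rightarrow> real).
      (\<forall>t\<ge>0. (x has_vector_derivative v t) (at t within {0..})) \<and>
      (\<forall>t\<ge>0. (v has_vector_derivative (- (a (x t) t) *\<^sub>R v t + g t)) (at t within {0..})) \<and>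
      (\<forall>y t. t \<ge> 0 \<longrightarrow> a y t \<ge> H / (1 + (norm y)\<^sup>2) powr \<beta>) \<and>
      (\<forall>t\<ge>0. norm (g t) \<le> Cg * (1 + t) powr (- \<eta>))
      \<longrightarrow> (\<forall>t\<ge>0. norm (v t) \<le> K (x 0) (v 0) * (1 + t) powr (- (\<eta> - 1)))"
proof -
  note H = assms(1) and b = assms(2) and eta = assms(3)
  define K where "K = (\<lambda>(x0::real^3) (v0::real^3).
    max Cg ((norm v0 + Cg/(\<eta>-1)) * (1 + ((\<eta> / (H/(1+norm x0+(norm v0 + Cg/(\<eta>-1))) powr (max (2*\<beta>) 0))) powr (1/(1-max (2*\<beta>) 0)))) powr (\<eta>-1)))"
  show ?thesis
  proof (rule exI[of _ K], intro allI impI)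
    fix x v g :: "real \<Rightarrow> real^3" and a :: "real^3 \<Rightarrow> real \<Rightarrow> real" and t :: real
    assume hyp: "(\<forall>t\<ge>0. (x has_vector_derivative v t) (at t within {0..})) \<and>
      (\<forall>t\<ge>0. (v has_vector_derivative (- (a (x t) t) *\<^sub>R v t + g t)) (at t within {0..})) \<and>
      (\<forall>y t. t \<ge> 0 \<longrightarrow> a y t \<ge> H / (1 + (norm y)\<^sup>2) powr \<beta>) \<and>
      (\<forall>t\<ge>0. norm (g t) \<le> Cg * (1 + t) powr (- \<eta>))" and t: "t \<ge> 0"
    from hyp have dx: "\<forall>t\<ge>0. (x has_vector_derivative v t) (at t within {0..})"
      and dv: "\<forall>t\<ge>0. (v has_vector_derivative (- (a (x t) t) *\<^sub>R v t + g t)) (at t within {0..})"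
      and ab: "\<forall>y t. t \<ge> 0 \<longrightarrow> a y t \<ge> H / (1 + (norm y)\<^sup>2) powr \<beta>"
      and gb: "\<forall>t\<ge>0. norm (g t) \<le> Cg * (1 + t) powr (- \<eta>)" by auto
    define A where "A t = a (x t) t" for t
    define M where "M = norm (v 0) + Cg/(\<eta>-1)"
    define \<gamma> where "\<gamma> = max (2*\<beta>) 0"
    define c where "c = H/(1+norm (x 0)+M) powr \<gamma>"
    define T0 where "T0 = (\<eta>/c) powr (1/(1-\<gamma>))"
    have KK: "K (x 0) (v 0) = max Cg (M*(1+T0) powr (\<eta>-1))"
      by (simp add: K_def M_def \<gamma>_def c_def T0_def)
    have Cg: "Cg \<ge> 0" using gb[rule_format, of 0] by simp (meson norm_ge_zero order_trans)
    have M0: "M \<ge> 0" using Cg eta by (simp add: M_def)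
    have dvA: "\<forall>t\<ge>0. (v has_vector_derivative (- A t *\<^sub>R v t + g t)) (at t within {0..})"
      using dv by (simp add: A_def)
    have Apos: "\<forall>t\<ge>0. A t \<ge> 0"
    proof (intro allI impI)
      fix t :: real assume t: "t \<ge> 0"
      have "0 \<le> H / (1 + (norm (x t))\<^sup>2) powr \<beta>" using H by simp
      thus "A t \<ge> 0" using ab t by (auto simp: A_def intro: order_trans)
    qed
    have vb: "\<forall>t\<ge>0. norm (v t) \<le> M" using stage1[OF dvA Apos gb eta] by (simp add: M_def)
    have xb: "\<forall>t\<ge>0. norm (x t) \<le> norm (x 0) + M*t" using stage2[OF dx vb] by simp
    have Ab: "\<forall>t\<ge>0. A t \<ge> c*(1+t) powr (-\<gamma>)"
    proof (intro allI impI)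
      fix t :: real assume t: "t \<ge> 0"
      have "c*(1+t) powr (-\<gamma>) \<le> H / (1 + (norm (x t))\<^sup>2) powr \<beta>"
        unfolding c_def \<gamma>_def
        by (rule abound[OF H b norm_ge_zero _ norm_ge_zero M0 t]) (use xb t in auto)
      thus "A t \<ge> c*(1+t) powr (-\<gamma>)" using ab t by (auto simp: A_def intro: order_trans)
    qed
    have "1+norm (x 0)+M > 0" using M0 by (simp add: add_pos_nonneg)
    hence "(1+norm (x 0)+M) powr \<gamma> > 0" by simp
    hence c0: "c > 0" using H by (simp add: c_def)
    have g0: "0 \<le> \<gamma>" and g1: "\<gamma> < 1" using b by (auto simp: \<gamma>_def)
    have T00: "T0 \<ge> 0" by (simp add: T0_def)
    have T0b: "c*(1+T0) powr (1-\<gamma>) \<ge> \<eta>"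
    proof -
      have ec: "\<eta>/c > 0" using eta c0 by simp
      have "T0 powr (1-\<gamma>) = (\<eta>/c) powr (1/(1-\<gamma>) * (1-\<gamma>))" by (simp add: T0_def powr_powr)
      also have "\<dots> = \<eta>/c" using g1 ec eta c0 by simp
      finally have e1: "T0 powr (1-\<gamma>) = \<eta>/c" .
      have "T0 powr (1-\<gamma>) \<le> (1+T0) powr (1-\<gamma>)" using T00 g1 by (intro powr_mono2) auto
      hence "c * (\<eta>/c) \<le> c * (1+T0) powr (1-\<gamma>)" using e1 c0 by (simp only: mult_left_mono less_imp_le)
      thus ?thesis using c0 by simp
    qed
    show "norm (v t) \<le> K (x 0) (v 0) * (1 + t) powr (- (\<eta> - 1))"
      unfolding KK
      by (rule stage4[OF dvA gb eta Ab c0 g0 g1 vb M0 T0b T00 _ _ t]) auto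
  qed
qed

end
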